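(* Let $\Omega$ be a pointed solid closed convex cone in a finite-dimensional real inner product space $X$ with $\Omega^*$ facially compact and locally smooth, $1\le j\le d$, and $(E,F)\in\mathcal P_j$. Then the orthogonal projection $p$ of $X$ onto $E_{1/2}(F)$ is injective on some neighbourhood of $e_F(E)$ in $\mathbf e(\xi^{-1}(E))=\{e_G(E):(E,G)\in\mathcal P_j\}$.
   Context: $A^*=\{y:\langle y,a\rangle\ge0\ \forall a\in A\}$, $A^\circledast=A^*\cap\operatorname{span}A$. Faces: subsets $F$ of a convex set such that every segment with midpoint in $F$ lies in $F$. $0=n_0<\dots<n_d=\dim X$ are the dimensions of faces of $\Omega^*$, $P_j$ the faces of dimension $n_{d-j}$ with the Fell topology; facially compact: each $P_j$ compact. Modular face of a cone $C$: a face $E$ containing a face of dimension $\max\{\dim G:G\text{ face of }C,\dim G<\dim E\}$; smooth: the relative interiors of those maximal-dimensional proper faces consist of regular points of $E$; locally smooth: all modular faces smooth. $\mathcal P_j=\{(E,F)\in P_{j-1}\times P_j:E\supset F\}$, $\xi(E,F)=E$; $e_F(E)$ is the unit generator of the extreme ray $F^\perp\cap E^\circledast$ of $E^\circledast$; $E_{1/2}(F)=\operatorname{span}(E)\cap F^\perp\cap e_F(E)^\perp$. *)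

theory Defs
  imports "HOL-Analysis.Analysis"
begin

definition dual_cone :: "'a::real_inner set \<Rightarrow> 'a set" where
  "dual_cone A = {y. \<forall>a\<in>A. inner y a \<ge> 0}"

definition dual_cone_span :: "'a::real_inner set \<Rightarrow> 'a set" where
  "dual_cone_span A = dual_cone A \<inter> span A"

definition face_dims :: "'a::euclidean_space set \<Rightarrow> int set" where
  "face_dims C = {aff_dim F | F. F face_of C \<and> F \<noteq> {}}"

definition face_dim_seq :: "'a::euclidean_space set \<Rightarrow> nat \<Rightarrow> int" where
  "face_dim_seq C k = sorted_list_of_set (face_dims C) ! k"

definition face_depth :: "'a::euclidean_space set \<Rightarrow> nat" where
  "face_depth C = card (face_dims C) - 1"

definition face_layer :: "'a::euclidean_space set \<Rightarrow> nat \<Rightarrow> 'a set set" where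
  "face_layer C j = {F. F face_of C \<and> F \<noteq> {} \<and> aff_dim F = face_dim_seq C (face_depth C - j)}"

definition fell_topology :: "'a::topological_space set topology" where
  "fell_topology = topology_generated_by
     ({{A. closed A \<and> A \<inter> K = {}} | K. compact K} \<union>
      {{A. closed A \<and> A \<inter> U \<noteq> {}} | U. open U})"

definition facially_compact :: "'a::euclidean_space set \<Rightarrow> bool" where
  "facially_compact C = (\<forall>j\<le>face_depth C. compactin fell_topology (face_layer C j))"

text \<open>Regular point of a convex cone E: at most one supporting hyperplane (within span E),
  i.e. the face of E^circledast exposed by x is at most a ray.\<close>
definition regular_point :: "'a::euclidean_space set \<Rightarrow> 'a \<Rightarrow> bool" where
  "regular_point E x \<longleftrightarrow> x \<in> E \<and> aff_dim (dual_cone_span E \<inter> orthogonal_comp {x}) \<le> 1"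

definition maximal_lower_face :: "'a::euclidean_space set \<Rightarrow> 'a set \<Rightarrow> 'a set \<Rightarrow> bool" where
  "maximal_lower_face C E G \<longleftrightarrow> G face_of C \<and> G \<noteq> {} \<and> aff_dim G < aff_dim E \<and>
     (\<forall>H. H face_of C \<and> H \<noteq> {} \<and> aff_dim H < aff_dim E \<longrightarrow> aff_dim H \<le> aff_dim G)"

definition modular_face :: "'a::euclidean_space set \<Rightarrow> 'a set \<Rightarrow> bool" where
  "modular_face C E \<longleftrightarrow> E face_of C \<and> (\<exists>G. G \<subseteq> E \<and> maximal_lower_face C E G)"

definition smooth_face :: "'a::euclidean_space set \<Rightarrow> 'a set \<Rightarrow> bool" where
  "smooth_face C E \<longleftrightarrow>
     (\<forall>G. G face_of E \<and> G \<noteq> E \<and> maximal_lower_face C E G \<longrightarrow>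
          (\<forall>x\<in>rel_interior G. regular_point E x))"

definition locally_smooth :: "'a::euclidean_space set \<Rightarrow> bool" where
  "locally_smooth C \<longleftrightarrow> (\<forall>E. modular_face C E \<longrightarrow> smooth_face C E)"

definition flag_pairs :: "'a::euclidean_space set \<Rightarrow> nat \<Rightarrow> ('a set \<times> 'a set) set" where
  "flag_pairs C j = {(E, F). E \<in> face_layer C (j - 1) \<and> F \<in> face_layer C j \<and> F \<subseteq> E}"

definition e_vec :: "'a::euclidean_space set \<Rightarrow> 'a set \<Rightarrow> 'a" where
  "e_vec F E = (SOME u. norm u = 1 \<and>
      orthogonal_comp F \<inter> dual_cone_span E = {t *\<^sub>R u | t. t \<ge> 0})"

definition half_space :: "'a::euclidean_space set \<Rightarrow> 'a set \<Rightarrow> 'a set" where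
  "half_space E F = span E \<inter> orthogonal_comp F \<inter> orthogonal_comp {e_vec F E}"

end

theory Submission imports Defs
begin

lemma dual_cone_convex: "convex (dual_cone A)"
  unfolding dual_cone_def convex_def by (auto simp: inner_add_left intro!: add_nonneg_nonneg mult_nonneg_nonneg)

lemma dual_cone_closed: "closed (dual_cone A)"
proof -
  have "dual_cone A = (\<Inter>a\<in>A. {y. inner y a \<ge> 0})" unfolding dual_cone_def by auto
  moreover have "closed {y. inner y a \<ge> (0::real)}" for a :: 'a
    using closed_halfspace_ge[of 0 a] by (simp add: inner_commute)
  ultimately show ?thesis by auto
qed

lemma dual_cone_scale: "x \<in> dual_cone A \<Longrightarrow> t \<ge> 0 \<Longrightarrow> t *\<^sub>R x \<in> dual_cone A"
  unfolding dual_cone_def by auto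

lemma dual_cone_zero: "0 \<in> dual_cone A"
  unfolding dual_cone_def by auto

lemma face_cone:
  fixes C :: "'a::euclidean_space set"
  assumes "E face_of C" "0 \<in> C" "\<And>x. x \<in> C \<Longrightarrow> 2 *\<^sub>R x \<in> C" "x \<in> E"
  shows "0 \<in> E \<and> 2 *\<^sub>R x \<in> E"
proof (cases "x = 0")
  case True then show ?thesis using assms by auto
next
  case False
  have xC: "x \<in> C" using assms face_of_imp_subset by blast
  have "x \<in> open_segment 0 (2 *\<^sub>R x)"
    using False unfolding open_segment_def closed_segment_def
    by (auto intro!: exI[of _ "1/2"] simp: scaleR_2)
  then show ?thesis using assms(1) xC assms(2,3,4) unfolding face_of_def by blast
qed



lemma ray:
  fixes E G :: "'a::euclidean_space set"
  assumes convE: "convex E" and E0: "0 \<in> E" and E2: "\<And>x. x \<in> E \<Longrightarrow> 2 *\<^sub>R x \<in> E"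
    and GE: "G face_of E" "G \<noteq> E" "G \<noteq> {}"
    and reg: "\<And>x. x \<in> rel_interior G \<Longrightarrow> aff_dim (dual_cone_span E \<inter> orthogonal_comp {x}) \<le> 1"
  shows "norm (e_vec G E) = 1 \<and> e_vec G E \<in> orthogonal_comp G \<inter> dual_cone_span E"
proof -
  have convG: "convex G" using GE face_of_imp_convex by blast
  obtain x where x: "x \<in> rel_interior G" using convG GE(3) rel_interior_eq_empty by blast
  have xG: "x \<in> G" using x rel_interior_subset by blast
  have GsE: "G \<subseteq> E" using GE face_of_imp_subset by blast
  have xE: "x \<in> E" using xG GsE by blast
  have xnot: "x \<notin> rel_interior E" using face_of_disjoint_rel_interior[OF GE(1,2)] xG by blast
  obtain a where a0: "a \<noteq> 0" and ale: "\<And>y. y \<in> E \<Longrightarrow> a \<bullet> x \<le> a \<bullet> y"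
     and alt: "\<And>y. y \<in> rel_interior E \<Longrightarrow> a \<bullet> x < a \<bullet> y"
    using supporting_hyperplane_rel_boundary[OF convE xE xnot] by metis
  obtain a1 a2 where a1s: "a1 \<in> span E" and a2o: "\<And>w. w \<in> span E \<Longrightarrow> orthogonal a2 w"
     and aeq: "a = a1 + a2"
    using orthogonal_subspace_decomp_exists[of E a] by metis
  have key: "a \<bullet> w = a1 \<bullet> w" if "w \<in> span E" for w
    using a2o[OF that] aeq by (simp add: orthogonal_def inner_add_left)
  have a1x: "a1 \<bullet> x = 0"
  proof -
    have "a \<bullet> x \<le> a \<bullet> 0" using ale E0 by blast
    moreover have "a \<bullet> x \<le> a \<bullet> (2 *\<^sub>R x)" using ale E2 xE by blast
    ultimately have "a \<bullet> x = 0" by simp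
    then show ?thesis using key xE span_base by metis
  qed
  have a1pos: "a1 \<bullet> y \<ge> 0" if "y \<in> E" for y
  proof -
    have "a \<bullet> y = a1 \<bullet> y" "a \<bullet> x = a1 \<bullet> x" using key span_base that xE by blast+
    then show ?thesis using ale[OF that] a1x by linarith
  qed
  obtain q where q: "q \<in> rel_interior E" using E0 convE rel_interior_eq_empty by blast
  have qE: "q \<in> E" using q rel_interior_subset by blast
  have a1q: "a1 \<bullet> q > 0"
  proof -
    have "a \<bullet> q = a1 \<bullet> q" "a \<bullet> x = a1 \<bullet> x" using key span_base qE xE by blast+
    then show ?thesis using alt[OF q] a1x by linarith
  qed
  then have a1nz: "a1 \<noteq> 0" by auto
  define D where "D = orthogonal_comp G \<inter> dual_cone_span E"
  have Deq: "D = dual_cone_span E \<inter> orthogonal_comp {x}"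
  proof
    show "D \<subseteq> dual_cone_span E \<inter> orthogonal_comp {x}"
      using xG unfolding D_def orthogonal_comp_def by auto
  next
    show "dual_cone_span E \<inter> orthogonal_comp {x} \<subseteq> D"
    proof
      fix y assume y: "y \<in> dual_cone_span E \<inter> orthogonal_comp {x}"
      have yd: "\<And>w. w \<in> E \<Longrightarrow> inner y w \<ge> 0"
        using y unfolding dual_cone_span_def dual_cone_def by auto
      have yx: "inner y x = 0" using y unfolding orthogonal_comp_def orthogonal_def
        by (simp add: inner_commute)
      have "inner y g = 0" if g: "g \<in> G" for g
      proof -
        obtain m where m: "m > 1" "(1 - m) *\<^sub>R g + m *\<^sub>R x \<in> G"
        proof -
          obtain m where "m > 1" "\<forall>e. e > 1 \<and> e \<le> m \<longrightarrow> (1 - e) *\<^sub>R g + e *\<^sub>R x \<in> G"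
            using convex_rel_interior_if[OF convG x] hull_inc[OF g] by blast
          then show ?thesis using that by blast
        qed
        have "inner y ((1 - m) *\<^sub>R g + m *\<^sub>R x) \<ge> 0" using yd m(2) GsE by blast
        then have "(1 - m) * inner y g \<ge> 0" using yx by (simp add: inner_add_right)
        then have "inner y g \<le> 0" using m(1)
          by (simp add: zero_le_mult_iff)
        moreover have "inner y g \<ge> 0" using yd g GsE by blast
        ultimately show ?thesis by linarith
      qed
      then show "y \<in> D" using y unfolding D_def orthogonal_comp_def orthogonal_def
        by (auto simp: inner_commute)
    qed
  qed
  have a1D: "a1 \<in> D" unfolding Deq dual_cone_span_def dual_cone_def orthogonal_comp_def orthogonal_def
    using a1pos a1s a1x by (auto simp: inner_commute)
  have D0: "0 \<in> D" unfolding D_def dual_cone_span_def dual_cone_def orthogonal_comp_def orthogonal_def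
    by (auto simp: span_zero)
  have coll: "collinear D" using reg[OF x] Deq collinear_aff_dim by metis
  then obtain u where u: "\<And>p q. p \<in> D \<Longrightarrow> q \<in> D \<Longrightarrow> \<exists>c. p - q = c *\<^sub>R u"
    unfolding collinear_def by metis
  have Dsub: "\<exists>t\<ge>0. z = t *\<^sub>R a1" if z: "z \<in> D" for z
  proof -
    obtain c0 where c0: "a1 - 0 = c0 *\<^sub>R u" using u[OF a1D D0] by blast
    obtain cz where cz: "z - 0 = cz *\<^sub>R u" using u[OF z D0] by blast
    have c0nz: "c0 \<noteq> 0" using c0 a1nz by auto
    have zeq: "z = (cz / c0) *\<^sub>R a1" using c0 cz c0nz by (simp add: scaleR_scaleR)
    have "cz / c0 \<ge> 0"
    proof (rule ccontr)
      assume neg: "\<not> cz / c0 \<ge> 0"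
      have "inner z q \<ge> 0" using z qE unfolding D_def dual_cone_span_def dual_cone_def by auto
      then have "(cz / c0) * inner a1 q \<ge> 0" using zeq by simp
      then show False using neg a1q by (smt (verit) mult_neg_pos)
    qed
    then show ?thesis using zeq by blast
  qed
  have Dsup: "t *\<^sub>R a1 \<in> D" if "t \<ge> 0" for t
    using a1D that unfolding D_def dual_cone_span_def dual_cone_def orthogonal_comp_def orthogonal_def
    by (auto simp: span_mul)
  define u0 where "u0 = (1 / norm a1) *\<^sub>R a1"
  have nu0: "norm u0 = 1" unfolding u0_def using a1nz by simp
  have "D = {t *\<^sub>R u0 | t. t \<ge> 0}"
  proof
    show "D \<subseteq> {t *\<^sub>R u0 | t. t \<ge> 0}"
    proof
      fix z assume "z \<in> D"
      then obtain t where t: "t \<ge> 0" "z = t *\<^sub>R a1" using Dsub by blast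
      then have "z = (t * norm a1) *\<^sub>R u0" unfolding u0_def using a1nz by simp
      then show "z \<in> {t *\<^sub>R u0 | t. t \<ge> 0}" using t by auto
    qed
  next
    show "{t *\<^sub>R u0 | t. t \<ge> 0} \<subseteq> D"
      using Dsup unfolding u0_def by (auto simp: scaleR_scaleR)
  qed
  then have ex: "\<exists>u. norm u = 1 \<and> orthogonal_comp G \<inter> dual_cone_span E = {t *\<^sub>R u | t. t \<ge> 0}"
    using nu0 unfolding D_def by blast
  have "norm (e_vec G E) = 1 \<and> orthogonal_comp G \<inter> dual_cone_span E = {t *\<^sub>R e_vec G E | t. t \<ge> 0}"
    unfolding e_vec_def using someI_ex[OF ex] .
  moreover have "1 *\<^sub>R e_vec G E \<in> {t *\<^sub>R e_vec G E | t. t \<ge> 0}" by (intro CollectI exI[of _ 1]) simp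
  ultimately show ?thesis by simp
qed



lemma face_dims_finite: "finite (face_dims (C::'a::euclidean_space set))"
proof -
  have "face_dims C \<subseteq> {-1..int DIM('a)}"
    unfolding face_dims_def using aff_dim_geq aff_dim_le_DIM by fastforce
  then show ?thesis using finite_subset by blast
qed

lemma layer_dims:
  fixes C :: "'a::euclidean_space set"
  assumes j1: "1 \<le> j" and jd: "j \<le> face_depth C"
    and E: "E \<in> face_layer C (j - 1)" and F: "F \<in> face_layer C j"
  shows "aff_dim F < aff_dim E \<and>
    (\<forall>H. H face_of C \<and> H \<noteq> {} \<and> aff_dim H < aff_dim E \<longrightarrow> aff_dim H \<le> aff_dim F)"
proof -
  define S where "S = face_dims C"
  define L where "L = sorted_list_of_set S"
  define k where "k = face_depth C - j"
  have fin: "finite S" unfolding S_def by (rule face_dims_finite)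
  have setL: "set L = S" unfolding L_def using fin by simp
  have lenL: "length L = card S" unfolding L_def by simp
  have sortL: "sorted L" and distL: "distinct L" unfolding L_def by simp_all
  have dk: "face_depth C - (j - 1) = Suc k" unfolding k_def using j1 jd by simp
  have kl: "Suc k < length L" using j1 jd lenL unfolding k_def face_depth_def S_def by simp
  have Ed: "aff_dim E = L ! Suc k" using E dk unfolding face_layer_def face_dim_seq_def L_def S_def by simp
  have Fd: "aff_dim F = L ! k" using F unfolding face_layer_def face_dim_seq_def L_def S_def k_def by simp
  have "L ! k \<le> L ! Suc k" using sorted_nth_mono[OF sortL _ kl] by simp
  moreover have "L ! k \<noteq> L ! Suc k" using nth_eq_iff_index_eq[OF distL] kl by simp
  ultimately have lt: "L ! k < L ! Suc k" by simp
  have "aff_dim H \<le> aff_dim F" if H: "H face_of C" "H \<noteq> {}" "aff_dim H < aff_dim E" for H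
  proof -
    have "aff_dim H \<in> set L" using H setL unfolding S_def face_dims_def by blast
    then obtain i where i: "i < length L" "L ! i = aff_dim H" by (metis in_set_conv_nth)
    have "\<not> Suc k \<le> i"
    proof
      assume "Suc k \<le> i"
      then have "L ! Suc k \<le> L ! i" using sorted_nth_mono[OF sortL _ i(1)] by simp
      then show False using H(3) i(2) Ed by simp
    qed
    then have "i \<le> k" by simp
    then have "L ! i \<le> L ! k" using sorted_nth_mono[OF sortL _] kl by simp
    then show ?thesis using i(2) Fd by simp
  qed
  then show ?thesis using lt Ed Fd by simp
qed



lemma fell_open_hit: "open U \<Longrightarrow> openin fell_topology {A. closed A \<and> A \<inter> U \<noteq> {}}"
  unfolding fell_topology_def by (rule topology_generated_by_Basis) blast

lemma lsc:
  fixes P :: "'a::euclidean_space set set" and E F :: "'a set" and ev :: "'a set \<Rightarrow> 'a"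
  assumes comp: "compactin fell_topology P"
    and closedP: "\<And>G. G \<in> P \<Longrightarrow> closed G"
    and closedE: "closed E"
    and evprop: "\<And>G g. G \<in> P \<Longrightarrow> G \<subseteq> E \<Longrightarrow> g \<in> G \<Longrightarrow> inner (ev G) g = 0"
    and posprop: "\<And>G. G \<in> P \<Longrightarrow> G \<subseteq> E \<Longrightarrow> G \<noteq> F \<Longrightarrow> \<exists>g\<in>G. inner e g > 0"
    and ne: "norm e = 1"
    and y: "y \<in> F" and dpos: "\<delta> > 0"
  shows "\<exists>r>0. \<forall>G\<in>P. G \<subseteq> E \<longrightarrow> dist (ev G) e < r \<longrightarrow> G \<inter> ball y \<delta> \<noteq> {}"
proof -
  define Bad where "Bad = {G \<in> P. G \<inter> ball y \<delta> = {}}"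
  have "\<exists>N \<rho>. openin fell_topology N \<and> G \<in> N \<and> \<rho> > 0 \<and>
          (\<forall>G'\<in>N. G' \<in> P \<longrightarrow> G' \<subseteq> E \<longrightarrow> dist (ev G') e < \<rho> \<longrightarrow> False)" if G: "G \<in> Bad" for G
  proof (cases "G \<subseteq> E")
    case True
    have GP: "G \<in> P" using G Bad_def by blast
    have "G \<noteq> F" using G y dpos unfolding Bad_def by auto
    then obtain g where g: "g \<in> G" "inner e g > 0" using posprop GP True by blast
    define a where "a = inner e g"
    define s where "s = a / 2"
    define \<rho> where "\<rho> = a / (2 * (norm g + s))"
    have apos: "a > 0" using g a_def by simp
    have spos: "s > 0" using apos s_def by simp
    have rpos: "\<rho> > 0" unfolding \<rho>_def using apos spos by (simp add: add_nonneg_pos)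
    define N where "N = {A. closed A \<and> A \<inter> ball g s \<noteq> {}}"
    have "openin fell_topology N" unfolding N_def by (rule fell_open_hit) simp
    moreover have "G \<in> N" unfolding N_def using closedP[OF GP] g spos by auto
    moreover have "False" if G': "G' \<in> N" "G' \<in> P" "G' \<subseteq> E" "dist (ev G') e < \<rho>" for G'
    proof -
      obtain g' where g': "g' \<in> G'" "dist g g' < s" using G'(1) unfolding N_def by auto
      have ev0: "inner (ev G') g' = 0" using evprop G' g' by blast
      have "inner e g' = inner e g + inner e (g' - g)" by (simp add: inner_diff_right)
      moreover have "\<bar>inner e (g' - g)\<bar> \<le> norm (g' - g)" using Cauchy_Schwarz_ineq2[of e "g' - g"] ne by simp
      moreover have "norm (g' - g) < s" using g' by (simp add: dist_norm norm_minus_commute)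
      ultimately have low: "inner e g' > a - s" using ne a_def by linarith
      have ng': "norm g' < norm g + s"
        using g'(2) norm_triangle_ineq2[of g' g] by (simp add: dist_norm norm_minus_commute)
      have "inner e g' = inner (e - ev G') g'" using ev0 by (simp add: inner_diff_left)
      also have "\<dots> \<le> norm (e - ev G') * norm g'" by (metis Cauchy_Schwarz_ineq2 abs_le_D1)
      also have "\<dots> \<le> \<rho> * (norm g + s)"
        using G'(4) ng' rpos by (intro mult_mono) (auto simp: dist_norm norm_minus_commute)
      also have "\<dots> = a / 2"
      proof -
        have "norm g + s > 0" using spos by (simp add: add_nonneg_pos)
        then show ?thesis unfolding \<rho>_def by (simp add: field_simps)
      qed
      finally show False using low s_def by linarith
    qed
    ultimately show ?thesis using rpos by blast
  next
    case False
    then obtain g where g: "g \<in> G" "g \<notin> E" by blast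
    obtain s where s: "s > 0" "ball g s \<subseteq> - E"
      using closedE g(2) open_contains_ball by (metis ComplI open_Compl)
    define N where "N = {A. closed A \<and> A \<inter> ball g s \<noteq> {}}"
    have GP: "G \<in> P" using G Bad_def by blast
    have "openin fell_topology N" unfolding N_def by (rule fell_open_hit) simp
    moreover have "G \<in> N" unfolding N_def using closedP[OF GP] g s by auto
    moreover have "(\<forall>G'\<in>N. G' \<in> P \<longrightarrow> G' \<subseteq> E \<longrightarrow> dist (ev G') e < 1 \<longrightarrow> False)"
      using s unfolding N_def by blast
    ultimately show ?thesis by (intro exI[of _ N] exI[of _ 1]) simp
  qed
  then obtain Nf \<rho>f where Nf: "\<And>G. G \<in> Bad \<Longrightarrow> openin fell_topology (Nf G) \<and> G \<in> Nf G \<and> \<rho>f G > 0 \<and>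
          (\<forall>G'\<in>Nf G. G' \<in> P \<longrightarrow> G' \<subseteq> E \<longrightarrow> dist (ev G') e < \<rho>f G \<longrightarrow> False)"
    by metis
  define M where "M = {A. closed A \<and> A \<inter> ball y \<delta> \<noteq> {}}"
  have oM: "openin fell_topology M" unfolding M_def by (rule fell_open_hit) simp
  have cov: "P \<subseteq> \<Union>(insert M (Nf ` Bad))"
  proof
    fix G assume GP: "G \<in> P"
    show "G \<in> \<Union>(insert M (Nf ` Bad))"
    proof (cases "G \<in> Bad")
      case True then show ?thesis using Nf by blast
    next
      case False then have "G \<in> M" using GP closedP unfolding Bad_def M_def by blast
      then show ?thesis by blast
    qed
  qed
  have opn: "\<forall>U\<in>insert M (Nf ` Bad). openin fell_topology U" using oM Nf by blast
  obtain \<F> where F1: "finite \<F>" "\<F> \<subseteq> insert M (Nf ` Bad)" "P \<subseteq> \<Union>\<F>"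
    using comp opn cov unfolding compactin_def by meson
  have "\<F> - {M} \<subseteq> Nf ` Bad" using F1 by blast
  then obtain Gs where Gs: "Gs \<subseteq> Bad" "finite Gs" "\<F> - {M} = Nf ` Gs"
    using finite_subset_image[of "\<F> - {M}" Nf Bad] F1(1)
    by (metis finite_Diff finite_subset_image)
  define r where "r = Min (insert 1 (\<rho>f ` Gs))"
  have rpos: "r > 0" unfolding r_def using Gs Nf by (subst Min_gr_iff) auto
  have rle: "r \<le> \<rho>f G" if "G \<in> Gs" for G unfolding r_def using Gs that by (intro Min_le) auto
  have "G' \<inter> ball y \<delta> \<noteq> {}" if G': "G' \<in> P" "G' \<subseteq> E" "dist (ev G') e < r" for G'
  proof -
    obtain U where U: "U \<in> \<F>" "G' \<in> U" using F1(3) G' by blast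
    show ?thesis
    proof (cases "U = M")
      case True then show ?thesis using U M_def by blast
    next
      case False
      then obtain G where G: "G \<in> Gs" "U = Nf G" using U Gs(3) by blast
      have "dist (ev G') e < \<rho>f G" using rle[OF G(1)] G'(3) by linarith
      then show ?thesis using Nf[of G] G Gs(1) U G' by blast
    qed
  qed
  then show ?thesis using rpos by blast
qed




lemma proj_orth:
  fixes S :: "'a::euclidean_space set"
  assumes "subspace S" "h \<in> S"
  shows "inner (x - closest_point S x) h = 0"
proof -
  have cl: "closed S" using assms closed_subspace by blast
  have cv: "convex S" using assms subspace_imp_convex by blast
  have ne: "S \<noteq> {}" using assms by blast
  define p where "p = closest_point S x"
  have pS: "p \<in> S" unfolding p_def using closest_point_in_set[OF cl ne] .
  have "p + h \<in> S" "p - h \<in> S" using pS assms subspace_add subspace_diff by blast+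
  then have "inner (x - p) ((p + h) - p) \<le> 0" "inner (x - p) ((p - h) - p) \<le> 0"
    unfolding p_def using closest_point_dot[OF cv cl] by blast+
  then show ?thesis unfolding p_def[symmetric] by (simp add: inner_diff_right)
qed

lemma norm_bound:
  fixes W B :: "'a::euclidean_space set" and e :: 'a
  assumes clW: "closed W" and finB: "finite B"
    and zero: "\<And>c. c \<in> W \<Longrightarrow> (\<forall>y\<in>B. inner c y = 0) \<Longrightarrow> inner c e = 0 \<Longrightarrow> c = 0"
    and sc: "\<And>c t. c \<in> W \<Longrightarrow> t *\<^sub>R c \<in> W"
  shows "\<exists>\<kappa>>0. \<forall>c\<in>W. \<kappa> * norm c \<le> (\<Sum>y\<in>B. \<bar>inner c y\<bar>) + \<bar>inner c e\<bar>"
proof -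
  define N where "N = (\<lambda>c. (\<Sum>y\<in>B. \<bar>inner c y\<bar>) + \<bar>inner c e\<bar>)"
  define K where "K = W \<inter> sphere 0 1"
  have hom: "N (t *\<^sub>R c) = \<bar>t\<bar> * N c" for t c
    unfolding N_def by (simp add: abs_mult sum_distrib_left distrib_left)
  have Npos: "N c > 0" if "c \<in> K" for c
  proof -
    have cW: "c \<in> W" and cn: "norm c = 1" using that K_def by auto
    have "N c \<ge> 0" unfolding N_def by (simp add: sum_nonneg)
    moreover have "N c \<noteq> 0"
    proof
      assume "N c = 0"
      then have "(\<Sum>y\<in>B. \<bar>inner c y\<bar>) = 0 \<and> \<bar>inner c e\<bar> = 0"
        unfolding N_def by (smt (verit) sum_nonneg abs_ge_zero)
      then have "\<forall>y\<in>B. inner c y = 0" "inner c e = 0"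
        using sum_nonneg_eq_0_iff[OF finB, of "\<lambda>y. \<bar>inner c y\<bar>"] by auto
      then have "c = 0" using zero cW by blast
      then show False using cn by simp
    qed
    ultimately show ?thesis by simp
  qed
  show ?thesis
  proof (cases "K = {}")
    case True
    have "c = 0" if "c \<in> W" for c
    proof (rule ccontr)
      assume "c \<noteq> 0"
      then have "(1 / norm c) *\<^sub>R c \<in> K" using sc[OF that] unfolding K_def by simp
      then show False using True by blast
    qed
    then have "\<forall>c\<in>W. 1 * norm c \<le> (\<Sum>y\<in>B. \<bar>inner c y\<bar>) + \<bar>inner c e\<bar>"
    proof (intro ballI)
      fix c assume c0: "\<And>c. c \<in> W \<Longrightarrow> c = 0" and "c \<in> W"
      then have "c = 0" by blast
      then show "1 * norm c \<le> (\<Sum>y\<in>B. \<bar>inner c y\<bar>) + \<bar>inner c e\<bar>" by simp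
    qed
    then show ?thesis by (intro exI[of _ 1]) simp
  next
    case False
    have cK: "compact K" unfolding K_def using clW compact_sphere closed_Int_compact by blast
    have "continuous_on K N" unfolding N_def by (intro continuous_intros)
    then obtain c0 where c0: "c0 \<in> K" "\<And>c. c \<in> K \<Longrightarrow> N c0 \<le> N c"
      using continuous_attains_inf[OF cK False] by blast
    have "N c0 * norm c \<le> N c" if cW: "c \<in> W" for c
    proof (cases "c = 0")
      case True then show ?thesis by (simp add: N_def)
    next
      case False
      have "(1 / norm c) *\<^sub>R c \<in> K" using sc[OF cW] False unfolding K_def by simp
      then have "N c0 \<le> N ((1 / norm c) *\<^sub>R c)" using c0 by blast
      also have "\<dots> = N c / norm c" using hom by simp
      finally show ?thesis using False by (simp add: field_simps)
    qed
    then show ?thesis using Npos[OF c0(1)] unfolding N_def by blast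
  qed
qed



theorem mainTheorem14:
  fixes \<Omega> :: "'a::euclidean_space set" and j :: nat and E F :: "'a set"
  assumes "convex_cone \<Omega>" and "closed \<Omega>"
    and "\<Omega> \<inter> uminus ` \<Omega> \<subseteq> {0}"
    and "interior \<Omega> \<noteq> {}"
    and "facially_compact (dual_cone \<Omega>)"
    and "locally_smooth (dual_cone \<Omega>)"
    and "1 \<le> j" and "j \<le> face_depth (dual_cone \<Omega>)"
    and "(E, F) \<in> flag_pairs (dual_cone \<Omega>) j"
  shows "\<exists>U. open U \<and> e_vec F E \<in> U \<and>
           inj_on (closest_point (half_space E F))
             (U \<inter> (\<lambda>(E', G). e_vec G E') ` {P \<in> flag_pairs (dual_cone \<Omega>) j. fst P = E})"
proof -
  define C where "C = dual_cone \<Omega>"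
  note fc = assms(5)[folded C_def] and ls = assms(6)[folded C_def]
  note j1 = assms(7) and jd = assms(8)[folded C_def] and EF = assms(9)[folded C_def]
  have convC: "convex C" unfolding C_def by (rule dual_cone_convex)
  have clC: "closed C" unfolding C_def by (rule dual_cone_closed)
  have C0: "0 \<in> C" unfolding C_def by (rule dual_cone_zero)
  have C2: "2 *\<^sub>R x \<in> C" if "x \<in> C" for x using dual_cone_scale[of x \<Omega> 2] that unfolding C_def by simp
  have EL: "E \<in> face_layer C (j - 1)" and FL: "F \<in> face_layer C j" and FE: "F \<subseteq> E"
    using EF unfolding flag_pairs_def by auto
  obtain dimlt: "aff_dim F < aff_dim E"
    and maxl: "\<And>H. H face_of C \<Longrightarrow> H \<noteq> {} \<Longrightarrow> aff_dim H < aff_dim E \<Longrightarrow> aff_dim H \<le> aff_dim F"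
    using layer_dims[OF j1 jd EL FL] by blast
  have EfC: "E face_of C" and Ene: "E \<noteq> {}" using EL unfolding face_layer_def by auto
  have FfC: "F face_of C" and Fne: "F \<noteq> {}" using FL unfolding face_layer_def by auto
  have convE: "convex E" using EfC face_of_imp_convex by blast
  have clE: "closed E" using EfC face_of_imp_closed convC clC by blast
  have E0: "0 \<in> E" using face_cone[OF EfC C0 C2] Ene by blast
  have E2: "\<And>x. x \<in> E \<Longrightarrow> 2 *\<^sub>R x \<in> E" using face_cone[OF EfC C0 C2] by blast
  have layer_dim: "aff_dim G = aff_dim F" if "G \<in> face_layer C j" for G
    using that FL unfolding face_layer_def by simp
  have mlf: "maximal_lower_face C E G" if G: "G \<in> face_layer C j" for G
    using G layer_dim[OF G] dimlt maxl unfolding face_layer_def maximal_lower_face_def by auto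
  have modE: "modular_face C E" unfolding modular_face_def using EfC FE mlf[OF FL] by blast
  have smE: "smooth_face C E" using ls modE unfolding locally_smooth_def by blast
  have evG: "norm (e_vec G E) = 1 \<and> e_vec G E \<in> orthogonal_comp G \<inter> dual_cone_span E"
    if G: "G \<in> face_layer C j" "G \<subseteq> E" for G
  proof -
    have GfC: "G face_of C" and Gne: "G \<noteq> {}" using G unfolding face_layer_def by auto
    have GfE: "G face_of E" using face_of_subset[OF GfC G(2)] EfC face_of_imp_subset by blast
    have GnE: "G \<noteq> E" using layer_dim[OF G(1)] dimlt by auto
    have "regular_point E x" if "x \<in> rel_interior G" for x
      using smE GfE GnE mlf[OF G(1)] that unfolding smooth_face_def by blast
    then have "aff_dim (dual_cone_span E \<inter> orthogonal_comp {x}) \<le> 1" if "x \<in> rel_interior G" for x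
      using that unfolding regular_point_def by blast
    then show ?thesis using ray[OF convE E0 E2 GfE GnE Gne] by blast
  qed
  define e where "e = e_vec F E"
  have ne: "norm e = 1" and eF: "e \<in> orthogonal_comp F" and edual: "e \<in> dual_cone E" and espan: "e \<in> span E"
    using evG[OF FL FE] unfolding e_def dual_cone_span_def by auto
  have edualE: "inner e x \<ge> 0" if "x \<in> E" for x using edual that unfolding dual_cone_def by blast
  have posprop: "\<exists>g\<in>G. inner e g > 0" if G: "G \<in> face_layer C j" "G \<subseteq> E" "G \<noteq> F" for G
  proof (rule ccontr)
    assume "\<not> (\<exists>g\<in>G. inner e g > 0)"
    then have G0: "\<And>g. g \<in> G \<Longrightarrow> inner e g = 0" using edualE G(2) by force
    define \<Phi> where "\<Phi> = E \<inter> {x. inner e x = 0}"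
    have \<Phi>fE: "\<Phi> face_of E" unfolding \<Phi>_def
      using face_of_Int_supporting_hyperplane_ge[OF convE, where a=e and b=0] edualE by simp
    have \<Phi>nE: "\<Phi> \<noteq> E"
    proof
      assume "\<Phi> = E"
      then have "\<And>x. x \<in> E \<Longrightarrow> orthogonal e x" unfolding \<Phi>_def orthogonal_def by blast
      then have "orthogonal e e" using orthogonal_to_span[OF espan] by blast
      then show False using ne unfolding orthogonal_def by simp
    qed
    have \<Phi>fC: "\<Phi> face_of C" using face_of_trans[OF \<Phi>fE EfC] .
    have F\<Phi>: "F \<subseteq> \<Phi>" using FE eF unfolding \<Phi>_def orthogonal_comp_def orthogonal_def
      by (auto simp: inner_commute)
    have G\<Phi>: "G \<subseteq> \<Phi>" using G(2) G0 unfolding \<Phi>_def by auto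
    have \<Phi>ne: "\<Phi> \<noteq> {}" using F\<Phi> Fne by blast
    have "aff_dim \<Phi> < aff_dim E" using face_of_aff_dim_lt[OF convE \<Phi>fE \<Phi>nE] .
    then have d\<Phi>: "aff_dim \<Phi> \<le> aff_dim F" using maxl[OF \<Phi>fC \<Phi>ne] by blast
    have \<Phi>C: "\<Phi> \<subseteq> C" using \<Phi>fC face_of_imp_subset by blast
    have conv\<Phi>: "convex \<Phi>" using \<Phi>fC face_of_imp_convex by blast
    have eqX: "X = \<Phi>" if X: "X \<in> face_layer C j" "X \<subseteq> \<Phi>" for X
    proof (rule ccontr)
      assume "X \<noteq> \<Phi>"
      have "X face_of C" using X unfolding face_layer_def by blast
      then have "X face_of \<Phi>" using face_of_subset X(2) \<Phi>C by blast
      then have "aff_dim X < aff_dim \<Phi>" using face_of_aff_dim_lt[OF conv\<Phi>] \<open>X \<noteq> \<Phi>\<close> by blast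
      then show False using layer_dim[OF X(1)] d\<Phi> by simp
    qed
    have "F = \<Phi>" "G = \<Phi>" using eqX FL F\<Phi> G(1) G\<Phi> by blast+
    then show False using G(3) by simp
  qed
  have compP: "compactin fell_topology (face_layer C j)" using fc jd unfolding facially_compact_def by blast
  have closedP: "closed G" if "G \<in> face_layer C j" for G
    using that face_of_imp_closed convC clC unfolding face_layer_def by blast
  have evprop: "inner (e_vec G E) g = 0" if "G \<in> face_layer C j" "G \<subseteq> E" "g \<in> G" for G g
    using evG[OF that(1,2)] that(3) unfolding orthogonal_comp_def orthogonal_def by (auto simp: inner_commute)
  have lscE: "\<exists>r>0. \<forall>G\<in>face_layer C j. G \<subseteq> E \<longrightarrow> dist (e_vec G E) e < r \<longrightarrow> G \<inter> ball y \<delta> \<noteq> {}"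
    if "y \<in> F" "\<delta> > 0" for y \<delta>
    using lsc[where ev="\<lambda>G. e_vec G E", OF compP closedP clE evprop posprop ne that] by blast
  obtain B where BF: "B \<subseteq> F" and indB: "independent B" and FB: "F \<subseteq> span B"
    using maximal_independent_subset[of F] by blast
  have finB: "finite B" using indB finiteI_independent by blast
  define S where "S = half_space E F"
  have subS: "subspace S" unfolding S_def half_space_def
    by (intro subspace_inter subspace_span subspace_orthogonal_comp)
  define W where "W = span E \<inter> orthogonal_comp S"
  have subW: "subspace W" unfolding W_def by (intro subspace_inter subspace_span subspace_orthogonal_comp)
  have Wzero: "c = 0" if c: "c \<in> W" "\<forall>y\<in>B. inner c y = 0" "inner c e = 0" for c
  proof -
    have "orthogonal c x" if "x \<in> span B" for x
      using orthogonal_to_span[OF that, of c] c(2) unfolding orthogonal_def by blast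
    then have "c \<in> orthogonal_comp F" using FB unfolding orthogonal_comp_def orthogonal_def
      by (auto simp: inner_commute)
    moreover have "c \<in> orthogonal_comp {e_vec F E}" using c(3) unfolding e_def orthogonal_comp_def orthogonal_def
      by (simp add: inner_commute)
    ultimately have "c \<in> S" using c(1) unfolding W_def S_def half_space_def by blast
    then have "orthogonal c c" using c(1) unfolding W_def orthogonal_comp_def by blast
    then show ?thesis unfolding orthogonal_def by simp
  qed
  obtain \<kappa> where kpos: "\<kappa> > 0" and kb: "\<And>c. c \<in> W \<Longrightarrow> \<kappa> * norm c \<le> (\<Sum>y\<in>B. \<bar>inner c y\<bar>) + \<bar>inner c e\<bar>"
    using norm_bound[OF closed_subspace[OF subW] finB Wzero] subspace_mul[OF subW] by blast
  define \<delta> where "\<delta> = \<kappa> / (2 * (real (card B) + 1))"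
  have dpos: "\<delta> > 0" unfolding \<delta>_def using kpos by simp
  have cardd: "real (card B) * \<delta> \<le> \<kappa> / 2"
  proof -
    have "real (card B) * \<delta> = (\<kappa> / 2) * (real (card B) / (real (card B) + 1))"
      unfolding \<delta>_def by (simp add: field_simps)
    also have "\<dots> \<le> (\<kappa> / 2) * 1" using kpos by (intro mult_left_mono) auto
    finally show ?thesis by simp
  qed
  have "\<forall>y\<in>B. \<exists>r>0. \<forall>G\<in>face_layer C j. G \<subseteq> E \<longrightarrow> dist (e_vec G E) e < r \<longrightarrow> G \<inter> ball y \<delta> \<noteq> {}"
    using lscE BF dpos by blast
  then obtain rf where rf: "\<And>y. y \<in> B \<Longrightarrow> rf y > 0 \<and> (\<forall>G\<in>face_layer C j. G \<subseteq> E \<longrightarrow> dist (e_vec G E) e < rf y \<longrightarrow> G \<inter> ball y \<delta> \<noteq> {})"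
    by metis
  define r where "r = Min (insert (\<kappa> / 2) (rf ` B))"
  have rpos: "r > 0" unfolding r_def using finB rf kpos by (subst Min_gr_iff) auto
  have rk: "r \<le> \<kappa> / 2" unfolding r_def using finB by (intro Min_le) auto
  have rle: "r \<le> rf y" if "y \<in> B" for y unfolding r_def using finB that by (intro Min_le) auto
  have meet: "G \<inter> ball y \<delta> \<noteq> {}" if "y \<in> B" "G \<in> face_layer C j" "G \<subseteq> E" "dist (e_vec G E) e < r" for y G
    using rf[OF that(1)] rle[OF that(1)] that by force
  have img: "\<exists>G. G \<in> face_layer C j \<and> G \<subseteq> E \<and> x = e_vec G E"
    if "x \<in> (\<lambda>(E', G). e_vec G E') ` {P \<in> flag_pairs C j. fst P = E}" for x
    using that unfolding flag_pairs_def by auto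
  have "inj_on (closest_point S) (ball e r \<inter> (\<lambda>(E', G). e_vec G E') ` {P \<in> flag_pairs C j. fst P = E})"
  proof (rule inj_onI)
    fix u v
    assume u: "u \<in> ball e r \<inter> (\<lambda>(E', G). e_vec G E') ` {P \<in> flag_pairs C j. fst P = E}"
      and v: "v \<in> ball e r \<inter> (\<lambda>(E', G). e_vec G E') ` {P \<in> flag_pairs C j. fst P = E}"
      and puv: "closest_point S u = closest_point S v"
    obtain G where G: "G \<in> face_layer C j" "G \<subseteq> E" "u = e_vec G E" using img u by blast
    obtain H where H: "H \<in> face_layer C j" "H \<subseteq> E" "v = e_vec H E" using img v by blast
    have un: "norm u = 1" and uG: "u \<in> orthogonal_comp G" and ud: "u \<in> dual_cone E" and us: "u \<in> span E"
      using evG[OF G(1,2)] G(3) unfolding dual_cone_span_def by auto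
    have vn: "norm v = 1" and vH: "v \<in> orthogonal_comp H" and vd: "v \<in> dual_cone E" and vs: "v \<in> span E"
      using evG[OF H(1,2)] H(3) unfolding dual_cone_span_def by auto
    have du: "dist u e < r" and dv: "dist v e < r" using u v by (auto simp: dist_commute)
    define c where "c = v - u"
    have cW: "c \<in> W"
    proof -
      have "c \<in> span E" unfolding c_def using us vs span_diff by blast
      moreover have "inner c h = 0" if h: "h \<in> S" for h
      proof -
        have "inner (v - closest_point S v) h = 0" "inner (u - closest_point S u) h = 0"
          using proj_orth[OF subS h] by blast+
        then show ?thesis unfolding c_def using puv by (simp add: inner_diff_left)
      qed
      ultimately show ?thesis unfolding W_def orthogonal_comp_def orthogonal_def
        by (auto simp: inner_commute)
    qed
    have yb: "\<bar>inner c y\<bar> \<le> norm c * \<delta>" if y: "y \<in> B" for y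
    proof -
      obtain g where g: "g \<in> G" "dist y g < \<delta>" using meet[OF y G(1,2)] G(3) du by auto
      obtain h where h: "h \<in> H" "dist y h < \<delta>" using meet[OF y H(1,2)] H(3) dv by auto
      have "inner u g = 0" using uG g unfolding orthogonal_comp_def orthogonal_def by (simp add: inner_commute)
      moreover have "inner v g \<ge> 0" using vd g G(2) unfolding dual_cone_def by blast
      ultimately have cg: "inner c g \<ge> 0" unfolding c_def by (simp add: inner_diff_left)
      have "inner v h = 0" using vH h unfolding orthogonal_comp_def orthogonal_def by (simp add: inner_commute)
      moreover have "inner u h \<ge> 0" using ud h H(2) unfolding dual_cone_def by blast
      ultimately have ch: "inner c h \<le> 0" unfolding c_def by (simp add: inner_diff_left)
      have b1: "\<bar>inner c (y - g)\<bar> \<le> norm c * \<delta>"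
        using Cauchy_Schwarz_ineq2[of c "y - g"] g(2) norm_ge_zero[of c]
        by (smt (verit) dist_norm mult_left_mono)
      have b2: "\<bar>inner c (y - h)\<bar> \<le> norm c * \<delta>"
        using Cauchy_Schwarz_ineq2[of c "y - h"] h(2) norm_ge_zero[of c]
        by (smt (verit) dist_norm mult_left_mono)
      have "inner c y = inner c g + inner c (y - g)" "inner c y = inner c h + inner c (y - h)"
        by (simp_all add: inner_diff_right)
      then show ?thesis using b1 b2 cg ch by linarith
    qed
    have eb: "\<bar>inner c e\<bar> \<le> norm c * ((dist u e + dist v e) / 2)"
    proof -
      have "inner c (u + v) = inner v v - inner u u" unfolding c_def
        by (simp add: inner_add_right inner_diff_left inner_diff_right inner_commute)
      also have "\<dots> = 0" using un vn by (simp add: dot_square_norm)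
      finally have cuv: "inner c (u + v) = 0" .
      have "2 * inner c e = inner c ((e - u) + (e - v))"
        using cuv by (simp add: inner_add_right inner_diff_right)
      then have "2 * \<bar>inner c e\<bar> \<le> \<bar>inner c (e - u)\<bar> + \<bar>inner c (e - v)\<bar>"
        by (simp add: inner_add_right)
      also have "\<dots> \<le> norm c * norm (e - u) + norm c * norm (e - v)"
        using Cauchy_Schwarz_ineq2 by (intro add_mono) auto
      finally show ?thesis by (simp add: dist_norm norm_minus_commute field_simps)
    qed
    show "u = v"
    proof (rule ccontr)
      assume "u \<noteq> v"
      then have cpos: "norm c > 0" unfolding c_def by simp
      have "(\<Sum>y\<in>B. \<bar>inner c y\<bar>) \<le> real (card B) * (norm c * \<delta>)"
        using sum_bounded_above[of B "\<lambda>y. \<bar>inner c y\<bar>"] yb by blast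
      also have "\<dots> \<le> norm c * (\<kappa> / 2)" using cardd cpos
        by (metis mult.left_commute mult_left_mono norm_ge_zero)
      finally have s1: "(\<Sum>y\<in>B. \<bar>inner c y\<bar>) \<le> norm c * (\<kappa> / 2)" .
      have "(dist u e + dist v e) / 2 < \<kappa> / 2" using du dv rk by (simp add: field_simps)
      then have s2: "\<bar>inner c e\<bar> < norm c * (\<kappa> / 2)" using eb cpos
        by (smt (verit) mult_strict_left_mono)
      have "\<kappa> * norm c \<le> (\<Sum>y\<in>B. \<bar>inner c y\<bar>) + \<bar>inner c e\<bar>" using kb[OF cW] .
      also have "\<dots> < norm c * (\<kappa> / 2) + norm c * (\<kappa> / 2)" using s1 s2 by linarith
      finally show False by (simp add: field_simps)
    qed
  qed
  then show ?thesis unfolding S_def C_def e_def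
    using rpos by (intro exI[of _ "ball (e_vec F E) r"]) auto
qed



end
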